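(* Let $q\geq 3$ be odd and let $\mu$ be the measure on $[0,1]$ with $d\mu=h\,dm$, $h(x)=1/x$. Then $\mu$ is infinite, $\sigma$-finite and $F_q$-invariant, and the transfer operator $\widehat{F}_q\colon L^1(\mu)\to L^1(\mu)$ of $F_q$ with respect to $\mu$ satisfies $\widehat{F}_q(f)=\mathcal{P}_q(fh)\,h^{-1}$ for all $f\in L^1(\mu)$.
   Context: Let $q\geq 3$ be odd and $\lambda=2\cos(\pi/q)$. Elements of $\mathrm{PGL}_2(\mathbb{R})$ act on $\mathbb{R}\cup\{\infty\}$ by $\begin{bmatrix}a&b\\c&d\end{bmatrix}.x=(ax+b)/(cx+d)$. Put $s(x)=\sin(x\pi/q)/\sin(\pi/q)$, $g_k=\begin{bmatrix}s(k)&-s(k+1)\\-s(k-1)&s(k)\end{bmatrix}$, $Q=\begin{bmatrix}0&1\\1&0\end{bmatrix}$, $K=\{(q+1)/2,\dots,q-1\}$. The generalized Farey map $F_q\colon[0,1]\to[0,1]$ is $F_q(x)=g_k.x$ on $[g_k^{-1}.0,g_k^{-1}.1]$ and $F_q(x)=Qg_k.x$ on $[(Qg_k)^{-1}.1,(Qg_k)^{-1}.0]$, $k\in K$. $m$ is Lebesgue measure on $[0,1]$. For $g\in\mathrm{PGL}_2(\mathbb{R})$, $\tau(g)f(x)=|(g^{-1})'(x)|f(g^{-1}.x)$, and $\mathcal{P}_q=\sum_{k\in K}(\tau(g_k)+\tau(Qg_k))$. For a measure $\nu$ on $[0,1]$, the transfer operator $L$ of $(F_q,\nu)$ on $L^1(\nu)$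 is defined by $\int_B L(f)\,d\nu=\int_{F_q^{-1}(B)}f\,d\nu$ for all Borel $B$ and $f\in L^1(\nu)$. *)

theory Defs
  imports "HOL-Analysis.Analysis"
begin

text \<open>A 2x2 real matrix [[a,b],[c,d]] is represented by the tuple (a,b,c,d);
  its class in PGL_2(R) acts by Moebius transformations.\<close>
type_synonym mat2 = "real \<times> real \<times> real \<times> real"

fun mob :: "mat2 \<Rightarrow> real \<Rightarrow> real" where
  "mob (a, b, c, d) x = (a * x + b) / (c * x + d)"

text \<open>A representative of the inverse in PGL_2(R) (the adjugate).\<close>
fun minv :: "mat2 \<Rightarrow> mat2" where
  "minv (a, b, c, d) = (d, - b, - c, a)"

fun mmul :: "mat2 \<Rightarrow> mat2 \<Rightarrow> mat2" where
  "mmul (a, b, c, d) (a', b', c', d') =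
     (a * a' + b * c', a * b' + b * d', c * a' + d * c', c * b' + d * d')"

definition Qm :: mat2 where "Qm = (0, 1, 1, 0)"

definition sq :: "nat \<Rightarrow> real \<Rightarrow> real" where
  "sq q x = sin (x * pi / real q) / sin (pi / real q)"

definition gk :: "nat \<Rightarrow> nat \<Rightarrow> mat2" where
  "gk q k = (sq q (real k), - sq q (real k + 1), - sq q (real k - 1), sq q (real k))"

definition Kq :: "nat \<Rightarrow> nat set" where
  "Kq q = {(q + 1) div 2 .. q - 1}"

text \<open>The generalized Farey map. On overlapping endpoints of the branch intervals
  (a finite set) some admissible branch is chosen; outside all intervals the value is 0.\<close>
definition Farey :: "nat \<Rightarrow> real \<Rightarrow> real" where
  "Farey q x =
    (if \<exists>k\<in>Kq q. x \<in> {mob (minv (gk q k)) 0 .. mob (minv (gk q k)) 1}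
     then mob (gk q (SOME k. k \<in> Kq q \<and> x \<in> {mob (minv (gk q k)) 0 .. mob (minv (gk q k)) 1})) x
     else if \<exists>k\<in>Kq q. x \<in> {mob (minv (mmul Qm (gk q k))) 1 .. mob (minv (mmul Qm (gk q k))) 0}
     then mob (mmul Qm (gk q (SOME k. k \<in> Kq q \<and>
             x \<in> {mob (minv (mmul Qm (gk q k))) 1 .. mob (minv (mmul Qm (gk q k))) 0}))) x
     else 0)"

definition tau :: "mat2 \<Rightarrow> (real \<Rightarrow> real) \<Rightarrow> real \<Rightarrow> real" where
  "tau g f x = \<bar>deriv (mob (minv g)) x\<bar> * f (mob (minv g) x)"

definition Pq :: "nat \<Rightarrow> (real \<Rightarrow> real) \<Rightarrow> real \<Rightarrow> real" where
  "Pq q f x = (\<Sum>k\<in>Kq q. tau (gk q k) f x + tau (mmul Qm (gk q k)) f x)"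

definition hfun :: "real \<Rightarrow> real" where "hfun x = 1 / x"

definition mu :: "real measure" where
  "mu = density (restrict_space lborel {0..1}) (\<lambda>x. ennreal (hfun x))"

definition invariant_measure :: "'a measure \<Rightarrow> ('a \<Rightarrow> 'a) \<Rightarrow> bool" where
  "invariant_measure M T \<longleftrightarrow> T \<in> measurable M M \<and>
     (\<forall>B\<in>sets M. emeasure M (T -` B \<inter> space M) = emeasure M B)"

text \<open>g represents the value L(f) of the transfer operator of (T, M) at f:
  g in L^1(M) and int_B g dM = int_{T^{-1} B} f dM for all measurable B.\<close>
definition is_transfer_image :: "'a measure \<Rightarrow> ('a \<Rightarrow> 'a) \<Rightarrow> ('a \<Rightarrow> real) \<Rightarrow> ('a \<Rightarrow> real) \<Rightarrow> bool" where
  "is_transfer_image M T f g \<longleftrightarrow> integrable M g \<and>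
     (\<forall>B\<in>sets M. (\<integral>x\<in>B. g x \<partial>M) = (\<integral>x\<in>(T -` B \<inter> space M). f x \<partial>M))"

end

theory Submission
  imports Defs
begin
lemma sin_sq_identity:
  fixes x t :: real
  shows "sin (x*t)^2 - sin ((x+1)*t) * sin ((x-1)*t) = sin t ^ 2"
proof -
  have 1: "sin ((x+1)*t) = sin (x*t) * cos t + cos (x*t) * sin t"
    by (simp add: distrib_right sin_add)
  have 2: "sin ((x-1)*t) = sin (x*t) * cos t - cos (x*t) * sin t"
    by (simp add: left_diff_distrib sin_diff)
  have 3: "cos t ^ 2 = 1 - sin t ^ 2" "cos (x*t)^2 = 1 - sin (x*t)^2"
    by (simp_all add: cos_squared_eq)
  have "sin (x*t)^2 - sin ((x+1)*t) * sin ((x-1)*t) =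
     sin (x*t)^2 - sin (x*t)^2 * cos t ^ 2 + cos (x*t)^2 * sin t^2"
    unfolding 1 2 by (simp add: algebra_simps power2_eq_square)
  also have "\<dots> = sin t ^ 2" unfolding 3 by (simp add: algebra_simps)
  finally show ?thesis .
qed

lemma mob_deriv:
  fixes al be ga de y :: real
  assumes "ga * y + de \<noteq> 0"
  shows "((\<lambda>y. (al * y + be) / (ga * y + de)) has_field_derivative
          (al * de - be * ga) / (ga * y + de)^2) (at y)"
  using assms
  by (auto intro!: derivative_eq_intros simp: field_simps power2_eq_square)

lemma mob_diff:
  fixes al be ga de y z :: real
  assumes "ga * y + de \<noteq> 0" "ga * z + de \<noteq> 0"
  shows "(al * z + be) / (ga * z + de) - (al * y + be) / (ga * y + de) =
         (al * de - be * ga) * (z - y) / ((ga * y + de) * (ga * z + de))"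
  using assms by (simp add: field_simps)

locale fsetup =
  fixes q :: nat
  assumes oddq: "odd q" and q3: "q \<ge> 3"
begin

definition m :: nat where "m = (q - 1) div 2"
definition s :: "nat \<Rightarrow> real" where "s j = sq q (real j)"
definition K :: "nat set" where "K = {m+1..q-1}"

lemma q_eq: "q = 2*m+1" using oddq q3 unfolding m_def by (auto elim!: oddE)
lemma m_ge: "m \<ge> 1" using q_eq q3 by auto
lemma Kq_eq: "Kq q = K" unfolding Kq_def K_def using q_eq by auto
lemma K_finite: "finite K" unfolding K_def by auto
lemma K_bounds: "k \<in> K \<Longrightarrow> 2 \<le> k \<and> k \<le> q - 1 \<and> m + 1 \<le> k"
  unfolding K_def using m_ge by auto

lemma sinpq_pos: "sin (pi / real q) > 0"
  using q3 by (intro sin_gt_zero) (auto simp: field_simps)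

lemma s_pos: "1 \<le> j \<Longrightarrow> j < q \<Longrightarrow> s j > 0"
  unfolding s_def sq_def using sinpq_pos q3
  by (intro divide_pos_pos sin_gt_zero) (auto simp: field_simps)

lemma s_nonneg: "j \<le> q \<Longrightarrow> s j \<ge> 0"
  unfolding s_def sq_def using sinpq_pos q3
  by (intro divide_nonneg_pos sin_ge_zero) (auto simp: field_simps)

lemma s_q: "s q = 0"
  unfolding s_def sq_def using q3 by simp

lemma s_m: "s (m+1) = s m"
proof -
  have rq: "real q = 2 * real m + 1" using q_eq by simp
  have "real (m+1) * pi / real q = pi - real m * pi / real q"
    using rq q3 by (simp add: field_simps)
  then show ?thesis unfolding s_def sq_def by (simp add: sin_pi_minus)
qed

lemma s_det: assumes "k \<ge> 1" shows "s k ^ 2 - s (k+1) * s (k-1) = 1"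
proof -
  let ?t = "pi / real q"
  have e: "\<And>x. x * pi / real q = x * ?t" by simp
  have "sin (real k * ?t)^2 - sin ((real k+1)*?t) * sin ((real k - 1)*?t) = sin ?t ^ 2"
    by (rule sin_sq_identity)
  moreover have "real (k+1) = real k + 1" "real (k-1) = real k - 1" using assms by auto
  ultimately show ?thesis unfolding s_def sq_def e using sinpq_pos
    by (simp add: field_simps power2_eq_square)
qed

definition a :: "nat \<Rightarrow> real" where "a k = s (k+1) / s k"
definition b :: "nat \<Rightarrow> real" where "b k = (s (k+1) + s k) / (s k + s (k-1))"

lemma a_pred: "k \<in> K \<Longrightarrow> a (k-1) = s k / s (k-1)"
  using K_bounds[of k] unfolding a_def by simp

lemma spos_K: assumes "k \<in> K"
  shows "s k > 0" "s (k-1) > 0" "s (k+1) \<ge> 0"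
  using K_bounds[OF assms] q3 by (auto intro!: s_pos s_nonneg)

lemma a_lt_b: assumes "k \<in> K" shows "a k < b k"
proof -
  note p = spos_K[OF assms]
  have d: "s (k+1) * s (k-1) < s k * s k" using s_det[of k] K_bounds[OF assms]
    by (simp add: power2_eq_square)
  show ?thesis unfolding a_def b_def using p d
    by (simp add: divide_simps algebra_simps)
qed

lemma b_lt_a: assumes "k \<in> K" shows "b k < a (k-1)"
proof -
  note p = spos_K[OF assms]
  have d: "s (k+1) * s (k-1) < s k * s k" using s_det[of k] K_bounds[OF assms]
    by (simp add: power2_eq_square)
  show ?thesis unfolding a_pred[OF assms] unfolding b_def using p d
    by (simp add: divide_simps algebra_simps)
qed

lemma a_nonneg: "k \<in> K \<Longrightarrow> a k \<ge> 0"
  using spos_K[of k] unfolding a_def by auto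

lemma a_last: "a (q-1) = 0" unfolding a_def using q3 s_q by simp
lemma a_m: "a m = 1" unfolding a_def using s_m s_pos[of m] m_ge q_eq by simp

lemma a_anti: "i \<le> j \<Longrightarrow> m \<le> i \<Longrightarrow> j \<le> q - 1 \<Longrightarrow> a j \<le> a i"
proof (induction j rule: dec_induct)
  case base then show ?case by simp
next
  case (step n)
  have "Suc n \<in> K" using step unfolding K_def by auto
  then have "a (Suc n) < a n" using a_lt_b b_lt_a by fastforce
  then show ?case using step by auto
qed

end


context fsetup
begin

definition HA :: "nat \<Rightarrow> real \<Rightarrow> real" where
  "HA k = (\<lambda>y. (s k * y + s (k+1)) / (s (k-1) * y + s k))"
definition HB :: "nat \<Rightarrow> real \<Rightarrow> real" where
  "HB k = (\<lambda>y. (s (k+1) * y + s k) / (s k * y + s (k-1)))"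
definition GA :: "nat \<Rightarrow> real \<Rightarrow> real" where
  "GA k = (\<lambda>x. (s k * x - s (k+1)) / (s k - s (k-1) * x))"
definition GB :: "nat \<Rightarrow> real \<Rightarrow> real" where
  "GB k = (\<lambda>x. (s k - s (k-1) * x) / (s k * x - s (k+1)))"
definition dA :: "nat \<Rightarrow> real \<Rightarrow> real" where
  "dA k = (\<lambda>y. 1 / (s (k-1) * y + s k)^2)"
definition dB :: "nat \<Rightarrow> real \<Rightarrow> real" where
  "dB k = (\<lambda>y. - 1 / (s k * y + s (k-1))^2)"

lemma gk_eq: "k \<ge> 1 \<Longrightarrow> gk q k = (s k, - s (k+1), - s (k-1), s k)"
  unfolding gk_def s_def by (simp add: of_nat_diff add.commute)

lemma negfrac: "(- x - y) / (- u - v) = (x + y) / (u + (v::real))"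
  by (metis minus_add_distrib minus_divide_divide diff_conv_add_uminus)

lemma mob_HA: "k \<ge> 1 \<Longrightarrow> mob (minv (gk q k)) = HA k"
  by (rule ext) (simp add: gk_eq HA_def)
lemma mob_HB: "k \<ge> 1 \<Longrightarrow> mob (minv (mmul Qm (gk q k))) = HB k"
  by (rule ext) (simp add: gk_eq HB_def Qm_def negfrac)
lemma mob_GA: "k \<ge> 1 \<Longrightarrow> mob (gk q k) = GA k"
  by (rule ext) (simp add: gk_eq GA_def)
lemma mob_GB: "k \<ge> 1 \<Longrightarrow> mob (mmul Qm (gk q k)) = GB k"
  by (rule ext) (simp add: gk_eq GB_def Qm_def)

lemma detK: "k \<in> K \<Longrightarrow> s k * s k - s (k+1) * s (k-1) = 1"
  using s_det[of k] K_bounds[of k] by (simp add: power2_eq_square)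

lemma denA_pos: "k \<in> K \<Longrightarrow> y \<ge> 0 \<Longrightarrow> s (k-1) * y + s k > 0"
  using spos_K[of k] by (simp add: add_nonneg_pos)
lemma denB_pos: "k \<in> K \<Longrightarrow> y \<ge> 0 \<Longrightarrow> s k * y + s (k-1) > 0"
  using spos_K[of k] by (simp add: add_nonneg_pos)

lemma HA_0: "k \<in> K \<Longrightarrow> HA k 0 = a k" unfolding HA_def a_def by simp
lemma HA_1: "k \<in> K \<Longrightarrow> HA k 1 = b k" unfolding HA_def b_def by (simp add: add.commute)
lemma HB_1: "k \<in> K \<Longrightarrow> HB k 1 = b k" unfolding HB_def b_def by simp
lemma HB_0: "k \<in> K \<Longrightarrow> HB k 0 = a (k-1)" unfolding HB_def using a_pred by simp

lemma HA_deriv: assumes "k \<in> K" "y \<ge> 0" shows "(HA k has_field_derivative dA k y) (at y)"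
proof -
  have "(HA k has_field_derivative (s k * s k - s (k+1) * s (k-1)) / (s (k-1) * y + s k)^2) (at y)"
    unfolding HA_def using denA_pos[OF assms] by (intro mob_deriv) auto
  then show ?thesis using detK[OF assms(1)] unfolding dA_def by simp
qed

lemma HB_deriv: assumes "k \<in> K" "y \<ge> 0" shows "(HB k has_field_derivative dB k y) (at y)"
proof -
  have "(HB k has_field_derivative (s (k+1) * s (k-1) - s k * s k) / (s k * y + s (k-1))^2) (at y)"
    unfolding HB_def using denB_pos[OF assms] by (intro mob_deriv) auto
  moreover have "s (k+1) * s (k-1) - s k * s k = -1" using detK[OF assms(1)] by simp
  ultimately show ?thesis unfolding dB_def by simp
qed

lemma HA_mono: assumes "k \<in> K" "0 \<le> y" "y \<le> z" shows "HA k y \<le> HA k z"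
proof -
  have "HA k z - HA k y = (s k * s k - s (k+1) * s (k-1)) * (z - y) /
      ((s (k-1) * y + s k) * (s (k-1) * z + s k))"
    unfolding HA_def using denA_pos[OF assms(1), of y] denA_pos[OF assms(1), of z] assms
    by (intro mob_diff) auto
  also have "\<dots> \<ge> 0" using detK[OF assms(1)] denA_pos[OF assms(1), of y] denA_pos[OF assms(1), of z] assms
    by (intro divide_nonneg_pos) auto
  finally show ?thesis by simp
qed

lemma HB_anti: assumes "k \<in> K" "0 \<le> y" "y \<le> z" shows "HB k z \<le> HB k y"
proof -
  have "HB k z - HB k y = (s (k+1) * s (k-1) - s k * s k) * (z - y) /
      ((s k * y + s (k-1)) * (s k * z + s (k-1)))"
    unfolding HB_def using denB_pos[OF assms(1), of y] denB_pos[OF assms(1), of z] assms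
    by (intro mob_diff) auto
  also have "\<dots> \<le> 0"
  proof -
    have n: "s (k+1) * s (k-1) - s k * s k = -1" using detK[OF assms(1)] by simp
    have p: "(s k * y + s (k-1)) * (s k * z + s (k-1)) > 0"
      using denB_pos[OF assms(1), of y] denB_pos[OF assms(1), of z] assms by simp
    show ?thesis unfolding n using p assms by (intro divide_nonpos_pos) auto
  qed
  finally show ?thesis by simp
qed


lemma GA_HA: assumes "k \<in> K" "y \<ge> 0" shows "GA k (HA k y) = y"
proof -
  define D where "D = s (k-1) * y + s k"
  have D: "D > 0" unfolding D_def using denA_pos[OF assms] .
  have e0: "s k * (s k * y + s (k+1)) - s (k+1) * D = y * (s k * s k - s (k+1) * s (k-1))"
    unfolding D_def by (simp add: algebra_simps)
  have e0': "s k * D - s (k-1) * (s k * y + s (k+1)) = (s k * s k - s (k+1) * s (k-1))"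
    unfolding D_def by (simp add: algebra_simps)
  have e1: "s k * HA k y - s (k+1) = y / D"
    unfolding HA_def D_def[symmetric] using D e0 detK[OF assms(1)] by (simp add: field_simps)
  have e2: "s k - s (k-1) * HA k y = 1 / D"
    unfolding HA_def D_def[symmetric] using D e0' detK[OF assms(1)] by (simp add: field_simps)
  show ?thesis unfolding GA_def using e1 e2 D by simp
qed

lemma GB_HB: assumes "k \<in> K" "y \<ge> 0" shows "GB k (HB k y) = y"
proof -
  define D where "D = s k * y + s (k-1)"
  have D: "D > 0" unfolding D_def using denB_pos[OF assms] .
  have e0: "s k * D - s (k-1) * (s (k+1) * y + s k) = y * (s k * s k - s (k+1) * s (k-1))"
    unfolding D_def by (simp add: algebra_simps)
  have e0': "s k * (s (k+1) * y + s k) - s (k+1) * D = (s k * s k - s (k+1) * s (k-1))"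
    unfolding D_def by (simp add: algebra_simps)
  have e1: "s k - s (k-1) * HB k y = y / D"
    unfolding HB_def D_def[symmetric] using D e0 detK[OF assms(1)] by (simp add: field_simps)
  have e2: "s k * HB k y - s (k+1) = 1 / D"
    unfolding HB_def D_def[symmetric] using D e0' detK[OF assms(1)] by (simp add: field_simps)
  show ?thesis unfolding GB_def using e1 e2 D by simp
qed

lemma HA_cont: "k \<in> K \<Longrightarrow> continuous_on {0..1} (HA k)"
  unfolding HA_def using denA_pos
  by (intro continuous_intros) (auto simp: less_imp_neq[symmetric] dest: denA_pos)
lemma HB_cont: "k \<in> K \<Longrightarrow> continuous_on {0..1} (HB k)"
  unfolding HB_def
  by (intro continuous_intros) (auto dest: denB_pos)

lemma HA_surj: assumes "k \<in> K" "x \<in> {a k..b k}" shows "\<exists>y\<in>{0..1}. HA k y = x"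
  using IVT'[of "HA k" 0 x 1] HA_cont[OF assms(1)] assms HA_0 HA_1 by auto
lemma HB_surj: assumes "k \<in> K" "x \<in> {b k..a (k-1)}" shows "\<exists>y\<in>{0..1}. HB k y = x"
  using IVT2'[of "HB k" 1 x 0] HB_cont[OF assms(1)] assms HB_0 HB_1 by auto

lemma HA_meas[measurable]: "HA k \<in> borel_measurable borel" unfolding HA_def by measurable
lemma HB_meas[measurable]: "HB k \<in> borel_measurable borel" unfolding HB_def by measurable
lemma GA_meas[measurable]: "GA k \<in> borel_measurable borel" unfolding GA_def by measurable
lemma GB_meas[measurable]: "GB k \<in> borel_measurable borel" unfolding GB_def by measurable
lemma dA_meas[measurable]: "dA k \<in> borel_measurable borel" unfolding dA_def by measurable
lemma dB_meas[measurable]: "dB k \<in> borel_measurable borel" unfolding dB_def by measurable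

end


context fsetup
begin

definition J :: "(nat \<times> bool) set" where "J = K \<times> UNIV"
definition H :: "nat \<times> bool \<Rightarrow> real \<Rightarrow> real" where
  "H j = (if snd j then HB (fst j) else HA (fst j))"
definition G :: "nat \<times> bool \<Rightarrow> real \<Rightarrow> real" where
  "G j = (if snd j then GB (fst j) else GA (fst j))"
definition dH :: "nat \<times> bool \<Rightarrow> real \<Rightarrow> real" where
  "dH j = (if snd j then dB (fst j) else dA (fst j))"
definition lo :: "nat \<times> bool \<Rightarrow> real" where
  "lo j = (if snd j then b (fst j) else a (fst j))"
definition hi :: "nat \<times> bool \<Rightarrow> real" where
  "hi j = (if snd j then a (fst j - 1) else b (fst j))"
definition I :: "nat \<times> bool \<Rightarrow> real set" where "I j = {lo j .. hi j}"
definition E :: "real set" where "E = a ` {m..q-1} \<union> b ` K"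

lemma J_finite: "finite J" unfolding J_def using K_finite by simp
lemma E_finite: "finite E" unfolding E_def using K_finite by simp

lemma H_meas[measurable]: "H j \<in> borel_measurable borel" by (simp add: H_def)
lemma G_meas[measurable]: "G j \<in> borel_measurable borel" by (simp add: G_def)
lemma dH_meas[measurable]: "dH j \<in> borel_measurable borel" by (simp add: dH_def)
lemma I_sets[measurable]: "I j \<in> sets borel" by (simp add: I_def)

lemma J_K: "j \<in> J \<Longrightarrow> fst j \<in> K" unfolding J_def by auto

lemma H_in: assumes "j \<in> J" "y \<in> {0..1}" shows "H j y \<in> I j"
proof (cases "snd j")
  case True
  have k: "fst j \<in> K" using J_K[OF assms(1)] .
  show ?thesis using True HB_anti[OF k, of 0 y] HB_anti[OF k, of y 1] assms HB_0[OF k] HB_1[OF k]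
    unfolding H_def I_def lo_def hi_def by auto
next
  case False
  have k: "fst j \<in> K" using J_K[OF assms(1)] .
  show ?thesis using False HA_mono[OF k, of 0 y] HA_mono[OF k, of y 1] assms HA_0[OF k] HA_1[OF k]
    unfolding H_def I_def lo_def hi_def by auto
qed

lemma G_H: "j \<in> J \<Longrightarrow> y \<ge> 0 \<Longrightarrow> G j (H j y) = y"
  unfolding G_def H_def using GA_HA GB_HB J_K by auto

lemma H_surj: assumes "j \<in> J" "x \<in> I j" shows "\<exists>y\<in>{0..1}. H j y = x"
  using assms HA_surj[of "fst j" x] HB_surj[of "fst j" x] J_K[OF assms(1)]
  unfolding H_def I_def lo_def hi_def by (cases "snd j") auto

lemma G_in: assumes "j \<in> J" "x \<in> I j" shows "G j x \<in> {0..1}" "H j (G j x) = x"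
proof -
  obtain y where y: "y \<in> {0..1}" "H j y = x" using H_surj[OF assms] by blast
  then have "G j x = y" using G_H[OF assms(1), of y] by auto
  then show "G j x \<in> {0..1}" "H j (G j x) = x" using y by auto
qed

lemma H_deriv: "j \<in> J \<Longrightarrow> y \<ge> 0 \<Longrightarrow> (H j has_field_derivative dH j y) (at y)"
  unfolding H_def dH_def using HA_deriv HB_deriv J_K by auto

lemma I_sub: assumes "j \<in> J" shows "I j \<subseteq> {a (fst j) .. a (fst j - 1)}"
  using a_lt_b[of "fst j"] b_lt_a[of "fst j"] J_K[OF assms]
  unfolding I_def lo_def hi_def by (cases "snd j") auto

lemma a_le1: assumes "k \<in> K" shows "a (k-1) \<le> 1"
  using a_anti[of m "k-1"] K_bounds[OF assms] a_m by auto

lemma I_sub01: assumes "j \<in> J" shows "I j \<subseteq> {0..1}"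
  using I_sub[OF assms] a_nonneg[OF J_K[OF assms]] a_le1[OF J_K[OF assms]] by auto

lemma cover: assumes "x \<in> {0..1}" shows "\<exists>j\<in>J. x \<in> I j"
proof -
  define S where "S = {k\<in>K. x \<le> a (k-1)}"
  have mS: "m+1 \<in> S" unfolding S_def K_def using assms a_m q_eq m_ge by auto
  have fS: "finite S" unfolding S_def using K_finite by simp
  define k where "k = Max S"
  have kS: "k \<in> S" unfolding k_def using fS mS Max_in by blast
  then have kK: "k \<in> K" and xk: "x \<le> a (k-1)" unfolding S_def by auto
  have ak: "a k \<le> x"
  proof (cases "k = q - 1")
    case True then show ?thesis using a_last assms by simp
  next
    case False
    then have "k+1 \<in> K" using kK unfolding K_def by auto
    moreover have "k+1 \<notin> S"
    proof
      assume "k+1 \<in> S"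
      then have "k+1 \<le> k" unfolding k_def using Max_ge[OF fS] by blast
      then show False by simp
    qed
    ultimately show ?thesis unfolding S_def by auto
  qed
  show ?thesis
  proof (cases "x \<le> b k")
    case True
    then show ?thesis using ak kK unfolding J_def I_def lo_def hi_def
      by (intro bexI[of _ "(k, False)"]) auto
  next
    case False
    then show ?thesis using xk kK unfolding J_def I_def lo_def hi_def
      by (intro bexI[of _ "(k, True)"]) auto
  qed
qed

lemma overlap_lt: assumes "j \<in> J" "j' \<in> J" "x \<in> I j" "x \<in> I j'" "fst j < fst j'"
  shows "x \<in> E"
proof -
  have k: "fst j \<in> K" "fst j' \<in> K" using J_K assms by auto
  have "a (fst j' - 1) \<le> a (fst j)"
    using a_anti[of "fst j" "fst j' - 1"] k assms(5) K_bounds[OF k(1)] K_bounds[OF k(2)] by auto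
  then have "x = a (fst j)" using I_sub[OF assms(1)] I_sub[OF assms(2)] assms(3,4) by fastforce
  moreover have "fst j \<in> {m..q-1}" using K_bounds[OF k(1)] by auto
  ultimately show ?thesis unfolding E_def by blast
qed

lemma overlap: assumes "j \<in> J" "j' \<in> J" "x \<in> I j" "x \<in> I j'" "x \<notin> E"
  shows "j = j'"
proof -
  have "\<not> fst j < fst j'" using overlap_lt[OF assms(1-4)] assms(5) by auto
  moreover have "\<not> fst j' < fst j" using overlap_lt[OF assms(2,1,4,3)] assms(5) by auto
  ultimately have fe: "fst j = fst j'" by simp
  show ?thesis
  proof (rule ccontr)
    assume "j \<noteq> j'"
    then have "snd j \<noteq> snd j'" using fe by (simp add: prod_eq_iff)
    then have "x = b (fst j)" using assms(3,4) fe unfolding I_def lo_def hi_def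
      by (cases "snd j") auto
    then show False using assms(5) J_K[OF assms(1)] unfolding E_def by auto
  qed
qed

lemma intA: "k \<in> K \<Longrightarrow> {mob (minv (gk q k)) 0 .. mob (minv (gk q k)) 1} = I (k, False)"
  using mob_HA[of k] K_bounds[of k] HA_0 HA_1 unfolding I_def lo_def hi_def by simp
lemma intB: "k \<in> K \<Longrightarrow> {mob (minv (mmul Qm (gk q k))) 1 .. mob (minv (mmul Qm (gk q k))) 0} = I (k, True)"
  using mob_HB[of k] K_bounds[of k] HB_0 HB_1 unfolding I_def lo_def hi_def by simp
lemma gA: "k \<in> K \<Longrightarrow> mob (gk q k) = G (k, False)"
  using mob_GA[of k] K_bounds[of k] unfolding G_def by simp
lemma gB: "k \<in> K \<Longrightarrow> mob (mmul Qm (gk q k)) = G (k, True)"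
  using mob_GB[of k] K_bounds[of k] unfolding G_def by simp

lemma Farey_branch: assumes "x \<in> {0..1}" shows "\<exists>j\<in>J. x \<in> I j \<and> Farey q x = G j x"
proof -
  let ?A = "\<lambda>k. {mob (minv (gk q k)) 0 .. mob (minv (gk q k)) 1}"
  let ?B = "\<lambda>k. {mob (minv (mmul Qm (gk q k))) 1 .. mob (minv (mmul Qm (gk q k))) 0}"
  show ?thesis
  proof (cases "\<exists>k\<in>Kq q. x \<in> ?A k")
    case True
    define k0 where "k0 = (SOME k. k \<in> Kq q \<and> x \<in> ?A k)"
    from True obtain k1 where "k1 \<in> Kq q \<and> x \<in> ?A k1" by blast
    then have "k0 \<in> Kq q \<and> x \<in> ?A k0" unfolding k0_def by (rule someI)
    then have k0K: "k0 \<in> K" and xA: "x \<in> ?A k0" using Kq_eq by simp_all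
    have k0: "k0 \<in> K" "x \<in> I (k0, False)" using k0K xA intA[OF k0K] by simp_all
    have "Farey q x = mob (gk q k0) x" unfolding Farey_def k0_def by (rule if_P[OF True])
    then have "Farey q x = G (k0, False) x" using gA[OF k0(1)] by simp
    moreover have "(k0, False) \<in> J" using k0(1) unfolding J_def by simp
    ultimately show ?thesis using k0(2) by blast
  next
    case False
    note F = False
    show ?thesis
    proof (cases "\<exists>k\<in>Kq q. x \<in> ?B k")
      case True
      define k0 where "k0 = (SOME k. k \<in> Kq q \<and> x \<in> ?B k)"
      from True obtain k1 where "k1 \<in> Kq q \<and> x \<in> ?B k1" by blast
      then have "k0 \<in> Kq q \<and> x \<in> ?B k0" unfolding k0_def by (rule someI)
      then have k0K: "k0 \<in> K" and xB: "x \<in> ?B k0" using Kq_eq by simp_all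
      have k0: "k0 \<in> K" "x \<in> I (k0, True)" using k0K xB intB[OF k0K] by simp_all
      have "Farey q x = mob (mmul Qm (gk q k0)) x" unfolding Farey_def k0_def
        by (simp only: if_not_P[OF F] if_P[OF True])
      then have "Farey q x = G (k0, True) x" using gB[OF k0(1)] by simp
      moreover have "(k0, True) \<in> J" using k0(1) unfolding J_def by simp
      ultimately show ?thesis using k0(2) by blast
    next
      case False
      obtain j where j: "j \<in> J" "x \<in> I j" using cover[OF assms] by blast
      obtain k t where jkt: "j = (k, t)" by (cases j)
      have kK: "k \<in> K" using J_K[OF j(1)] jkt by simp
      have kq: "k \<in> Kq q" using kK Kq_eq by simp
      show ?thesis
      proof (cases t)
        case True
        then have "x \<in> ?B k" using intB[OF kK] j(2) jkt by simp
        then show ?thesis using False kq by blast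
      next
        case f2: False
        then have "x \<in> ?A k" using intA[OF kK] j(2) jkt by simp
        then show ?thesis using F kq by blast
      qed
    qed
  qed
qed

lemma Farey_in: "x \<in> {0..1} \<Longrightarrow> Farey q x \<in> {0..1}"
  using Farey_branch G_in by metis

lemma Farey_eq: assumes "j \<in> J" "x \<in> I j" "x \<notin> E" shows "Farey q x = G j x"
proof -
  obtain j' where "j' \<in> J" "x \<in> I j'" "Farey q x = G j' x"
    using Farey_branch I_sub01[OF assms(1)] assms(2) by blast
  then show ?thesis using overlap[OF assms(1) _ assms(2) _ assms(3)] by metis
qed

lemma Farey_out: assumes "x \<notin> {0..1}" shows "Farey q x = 0"
proof -
  have nA: "\<not> (\<exists>k\<in>Kq q. x \<in> {mob (minv (gk q k)) 0 .. mob (minv (gk q k)) 1})"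
  proof
    assume "\<exists>k\<in>Kq q. x \<in> {mob (minv (gk q k)) 0 .. mob (minv (gk q k)) 1}"
    then obtain k where k: "k \<in> K" "x \<in> {mob (minv (gk q k)) 0 .. mob (minv (gk q k)) 1}"
      using Kq_eq by blast
    then have "x \<in> I (k, False)" using intA[OF k(1)] by simp
    moreover have "(k, False) \<in> J" using k(1) unfolding J_def by simp
    ultimately show False using I_sub01 assms by blast
  qed
  have nB: "\<not> (\<exists>k\<in>Kq q. x \<in> {mob (minv (mmul Qm (gk q k))) 1 .. mob (minv (mmul Qm (gk q k))) 0})"
  proof
    assume "\<exists>k\<in>Kq q. x \<in> {mob (minv (mmul Qm (gk q k))) 1 .. mob (minv (mmul Qm (gk q k))) 0}"
    then obtain k where k: "k \<in> K" "x \<in> {mob (minv (mmul Qm (gk q k))) 1 .. mob (minv (mmul Qm (gk q k))) 0}"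
      using Kq_eq by blast
    then have "x \<in> I (k, True)" using intB[OF k(1)] by simp
    moreover have "(k, True) \<in> J" using k(1) unfolding J_def by simp
    ultimately show False using I_sub01 assms by blast
  qed
  show ?thesis unfolding Farey_def by (simp only: if_not_P[OF nA] if_not_P[OF nB])
qed

lemma Farey_meas[measurable]: "Farey q \<in> borel_measurable borel"
proof (rule measurable_discrete_difference[where X=E])
  show "(\<lambda>x. \<Sum>j\<in>J. indicator (I j) x * G j x) \<in> borel_measurable borel"
    by (intro borel_measurable_sum borel_measurable_times borel_measurable_indicator I_sets G_meas)
  show "countable E" using E_finite by (simp add: countable_finite)
  show "\<And>x. x \<in> E \<Longrightarrow> {x} \<in> sets borel" by simp
  show "\<And>x. x \<in> E \<Longrightarrow> Farey q x \<in> space borel" by simp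
  fix x assume x: "x \<in> space borel" "x \<notin> E"
  show "(\<Sum>j\<in>J. indicator (I j) x * G j x) = Farey q x"
  proof (cases "x \<in> {0..1}")
    case False
    then have "\<And>j. j \<in> J \<Longrightarrow> x \<notin> I j" using I_sub01 by blast
    then have "\<And>j. j \<in> J \<Longrightarrow> indicator (I j) x = (0::real)" by simp
    then show ?thesis using Farey_out[OF False] by simp
  next
    case True
    obtain j where j: "j \<in> J" "x \<in> I j" using cover[OF True] by blast
    have "\<And>i. i \<in> J \<Longrightarrow> indicator (I i) x * G i x = (if i = j then G j x else 0)"
    proof -
      fix i assume i: "i \<in> J"
      show "indicator (I i) x * G i x = (if i = j then G j x else 0)"
      proof (cases "i = j")
        case True then show ?thesis using j by simp
      next
        case False
        then have "x \<notin> I i" using overlap[OF j(1) i j(2) _ x(2)] by blast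
        then show ?thesis using False by simp
      qed
    qed
    then have "(\<Sum>i\<in>J. indicator (I i) x * G i x) = (\<Sum>i\<in>J. if i = j then G j x else 0)"
      by (intro sum.cong) auto
    also have "\<dots> = G j x" using j(1) J_finite by simp
    finally show ?thesis using Farey_eq[OF j x(2)] by simp
  qed
qed

end


lemma ai_iff:
  fixes F :: "real \<Rightarrow> real"
  assumes T[measurable]: "T \<in> sets borel" and F[measurable]: "F \<in> borel_measurable borel"
  shows "F absolutely_integrable_on T \<longleftrightarrow> integrable lborel (\<lambda>x. indicator T x * F x)"
proof -
  have "(\<lambda>x. indicator T x *\<^sub>R F x) \<in> borel_measurable lborel" by measurable
  then show ?thesis unfolding set_integrable_def by (simp add: integrable_completion)
qed

lemma ai_integral:
  fixes F :: "real \<Rightarrow> real"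
  assumes T[measurable]: "T \<in> sets borel" and F[measurable]: "F \<in> borel_measurable borel"
    and ai: "F absolutely_integrable_on T"
  shows "integral T F = (\<integral>x. indicator T x * F x \<partial>lborel)"
proof -
  have "(\<lambda>x. indicator T x *\<^sub>R F x) \<in> borel_measurable lborel" by measurable
  then have "(\<integral>x. indicator T x *\<^sub>R F x \<partial>lebesgue) = (\<integral>x. indicator T x *\<^sub>R F x \<partial>lborel)"
    by (simp add: integral_completion)
  then show ?thesis using set_lebesgue_integral_eq_integral(2)[OF ai]
    unfolding set_lebesgue_integral_def by simp
qed

lemma cov_nn:
  fixes Hf dHf F :: "real \<Rightarrow> real" and S :: "real set"
  assumes S[measurable]: "S \<in> sets borel" and HS[measurable]: "Hf ` S \<in> sets borel"
    and der: "\<And>y. y \<in> S \<Longrightarrow> (Hf has_field_derivative dHf y) (at y)"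
    and inj: "inj_on Hf S"
    and F[measurable]: "F \<in> borel_measurable borel" and Fnn: "\<And>x. F x \<ge> 0"
    and Hm[measurable]: "Hf \<in> borel_measurable borel" and dm[measurable]: "dHf \<in> borel_measurable borel"
  shows "(\<integral>\<^sup>+ y. ennreal (indicator S y * (\<bar>dHf y\<bar> * F (Hf y))) \<partial>lborel)
       = (\<integral>\<^sup>+ x. ennreal (indicator (Hf ` S) x * F x) \<partial>lborel)"
proof -
  define L where "L = (\<lambda>y. \<bar>dHf y\<bar> * F (Hf y))"
  have Lm[measurable]: "L \<in> borel_measurable borel" unfolding L_def by measurable
  have Sl: "S \<in> sets lebesgue" by simp
  have cov: "\<And>b. (L absolutely_integrable_on S \<and> integral S L = b) \<longleftrightarrow>
      (F absolutely_integrable_on (Hf ` S) \<and> integral (Hf ` S) F = b)"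
    unfolding L_def
    by (rule has_absolute_integral_change_of_variables_1'[OF Sl _ inj])
       (auto intro: has_field_derivative_at_within der)
  have Lnn: "\<And>y. indicator S y * L y \<ge> 0" unfolding L_def using Fnn by simp
  have Rnn: "\<And>y. indicator (Hf ` S) y * F y \<ge> 0" using Fnn by simp
  show ?thesis
  proof (cases "F absolutely_integrable_on (Hf ` S)")
    case True
    then have LS: "L absolutely_integrable_on S" "integral S L = integral (Hf ` S) F"
      using cov by blast+
    have i1: "integrable lborel (\<lambda>y. indicator S y * L y)" using LS(1) ai_iff by simp
    have i2: "integrable lborel (\<lambda>x. indicator (Hf ` S) x * F x)" using True ai_iff by simp
    have "(\<integral>\<^sup>+ y. ennreal (indicator S y * L y) \<partial>lborel) = ennreal (\<integral>y. indicator S y * L y \<partial>lborel)"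
      using i1 Lnn by (intro nn_integral_eq_integral) auto
    also have "(\<integral>y. indicator S y * L y \<partial>lborel) = integral S L"
      using ai_integral[OF S Lm LS(1)] by simp
    also have "\<dots> = (\<integral>x. indicator (Hf ` S) x * F x \<partial>lborel)"
      using LS(2) ai_integral[OF HS F True] by simp
    also have "ennreal \<dots> = (\<integral>\<^sup>+ x. ennreal (indicator (Hf ` S) x * F x) \<partial>lborel)"
      using i2 Rnn by (intro nn_integral_eq_integral[symmetric]) auto
    finally show ?thesis unfolding L_def .
  next
    case False
    then have nL: "\<not> L absolutely_integrable_on S" using cov by blast
    have "(\<integral>\<^sup>+ y. ennreal (indicator S y * L y) \<partial>lborel) = \<infinity>"
      using nL ai_iff Lnn by (intro nn_integral_nonneg_infinite) auto
    moreover have "(\<integral>\<^sup>+ x. ennreal (indicator (Hf ` S) x * F x) \<partial>lborel) = \<infinity>"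
      using False ai_iff Rnn by (intro nn_integral_nonneg_infinite) auto
    ultimately show ?thesis unfolding L_def by simp
  qed
qed


context fsetup
begin

definition PP :: "(real \<Rightarrow> real) \<Rightarrow> real \<Rightarrow> real" where
  "PP F y = (\<Sum>k\<in>K. \<bar>dA k y\<bar> * F (HA k y) + \<bar>dB k y\<bar> * F (HB k y))"

lemma PP_J: "PP F y = (\<Sum>j\<in>J. \<bar>dH j y\<bar> * F (H j y))"
proof -
  have "PP F y = (\<Sum>k\<in>K. \<Sum>t\<in>UNIV. \<bar>dH (k,t) y\<bar> * F (H (k,t) y))"
    unfolding PP_def by (simp add: UNIV_bool dH_def H_def add.commute)
  also have "\<dots> = (\<Sum>j\<in>J. \<bar>dH j y\<bar> * F (H j y))"
    unfolding J_def by (subst sum.cartesian_product) (simp add: case_prod_beta)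
  finally show ?thesis .
qed

lemma HS_eq: assumes "j \<in> J" "B \<subseteq> {0..1}" shows "H j ` B = I j \<inter> G j -` B"
proof
  show "H j ` B \<subseteq> I j \<inter> G j -` B"
    using H_in[OF assms(1)] G_H[OF assms(1)] assms(2) by auto
next
  show "I j \<inter> G j -` B \<subseteq> H j ` B"
  proof
    fix x assume x: "x \<in> I j \<inter> G j -` B"
    then have "x = H j (G j x)" using G_in[OF assms(1)] by auto
    then show "x \<in> H j ` B" using x by blast
  qed
qed

lemma HS_sets: assumes "j \<in> J" "B \<subseteq> {0..1}" "B \<in> sets borel" shows "H j ` B \<in> sets borel"
proof -
  have "I j \<inter> G j -` B \<in> sets borel"
    using assms(3) by (intro sets.Int I_sets) (simp add: measurable_sets_borel[OF G_meas])
  then show ?thesis using HS_eq[OF assms(1,2)] by simp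
qed

lemma H_inj: assumes "j \<in> J" "B \<subseteq> {0..1}" shows "inj_on (H j) B"
  by (rule inj_on_inverseI[where g="G j"]) (use G_H[OF assms(1)] assms(2) in auto)

lemma AE_notE: "AE x in lborel. x \<notin> E"
  by (rule AE_discrete_difference) (auto simp: E_finite countable_finite)

lemma ind_sum: assumes "x \<notin> E" "B \<subseteq> {0..1}"
  shows "(\<Sum>j\<in>J. indicator (H j ` B) x) = (indicator (Farey q -` B \<inter> {0..1}) x :: real)"
proof (cases "x \<in> {0..1}")
  case False
  have "\<And>j. j \<in> J \<Longrightarrow> x \<notin> H j ` B"
    using HS_eq[OF _ assms(2)] I_sub01 False by blast
  then show ?thesis using False by simp
next
  case True
  obtain j0 where j0: "j0 \<in> J" "x \<in> I j0" using cover[OF True] by blast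
  have "\<And>i. i \<in> J \<Longrightarrow> (indicator (H i ` B) x :: real) = (if i = j0 then indicator (H j0 ` B) x else 0)"
  proof -
    fix i assume i: "i \<in> J"
    show "(indicator (H i ` B) x :: real) = (if i = j0 then indicator (H j0 ` B) x else 0)"
    proof (cases "i = j0")
      case False
      then have "x \<notin> I i" using overlap[OF j0(1) i j0(2) _ assms(1)] by blast
      then have "x \<notin> H i ` B" using HS_eq[OF i assms(2)] by blast
      then show ?thesis using False by simp
    qed simp
  qed
  then have "(\<Sum>j\<in>J. (indicator (H j ` B) x :: real)) = (\<Sum>j\<in>J. if j = j0 then indicator (H j0 ` B) x else 0)"
    by (intro sum.cong) auto
  also have "\<dots> = indicator (H j0 ` B) x" using j0(1) J_finite by simp
  also have "\<dots> = indicator (Farey q -` B \<inter> {0..1}) x"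
    using HS_eq[OF j0(1) assms(2)] Farey_eq[OF j0 assms(1)] j0(2) True
    by (simp add: indicator_def)
  finally show ?thesis .
qed

lemma core_nn:
  assumes B[measurable]: "B \<in> sets borel" and B01: "B \<subseteq> {0..1}"
    and F[measurable]: "F \<in> borel_measurable borel" and Fnn: "\<And>x. F x \<ge> 0"
  shows "(\<integral>\<^sup>+ y. ennreal (indicator B y * PP F y) \<partial>lborel)
       = (\<integral>\<^sup>+ x. ennreal (indicator (Farey q -` B \<inter> {0..1}) x * F x) \<partial>lborel)"
proof -
  have "(\<integral>\<^sup>+ y. ennreal (indicator B y * PP F y) \<partial>lborel)
      = (\<integral>\<^sup>+ y. (\<Sum>j\<in>J. ennreal (indicator B y * (\<bar>dH j y\<bar> * F (H j y)))) \<partial>lborel)"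
  proof (intro nn_integral_cong)
    fix y
    have "indicator B y * PP F y = (\<Sum>j\<in>J. indicator B y * (\<bar>dH j y\<bar> * F (H j y)))"
      unfolding PP_J by (simp add: sum_distrib_left)
    then show "ennreal (indicator B y * PP F y) = (\<Sum>j\<in>J. ennreal (indicator B y * (\<bar>dH j y\<bar> * F (H j y))))"
      using Fnn by (simp add: sum_ennreal)
  qed
  also have "\<dots> = (\<Sum>j\<in>J. \<integral>\<^sup>+ y. ennreal (indicator B y * (\<bar>dH j y\<bar> * F (H j y))) \<partial>lborel)"
    by (intro nn_integral_sum) measurable
  also have "\<dots> = (\<Sum>j\<in>J. \<integral>\<^sup>+ x. ennreal (indicator (H j ` B) x * F x) \<partial>lborel)"
  proof (intro sum.cong refl cov_nn)
    fix j assume j: "j \<in> J"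
    show "H j ` B \<in> sets borel" using HS_sets[OF j B01 B] .
    show "\<And>y. y \<in> B \<Longrightarrow> (H j has_field_derivative dH j y) (at y)"
      using H_deriv[OF j] B01 by auto
    show "inj_on (H j) B" using H_inj[OF j B01] .
  qed (auto simp: Fnn)
  also have "\<dots> = (\<integral>\<^sup>+ x. (\<Sum>j\<in>J. ennreal (indicator (H j ` B) x * F x)) \<partial>lborel)"
  proof (rule nn_integral_sum[symmetric])
    fix j assume j: "j \<in> J"
    have [measurable]: "H j ` B \<in> sets borel" using HS_sets[OF j B01 B] .
    show "(\<lambda>x. ennreal (indicator (H j ` B) x * F x)) \<in> borel_measurable lborel" by measurable
  qed
  also have "\<dots> = (\<integral>\<^sup>+ x. ennreal (indicator (Farey q -` B \<inter> {0..1}) x * F x) \<partial>lborel)"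
  proof (intro nn_integral_cong_AE, use AE_notE in eventually_elim)
    case (elim x)
    have "(\<Sum>j\<in>J. ennreal (indicator (H j ` B) x * F x)) = ennreal (\<Sum>j\<in>J. indicator (H j ` B) x * F x)"
      using Fnn by (simp add: sum_ennreal)
    also have "(\<Sum>j\<in>J. indicator (H j ` B) x * F x) = (\<Sum>j\<in>J. indicator (H j ` B) x) * F x"
      by (simp add: sum_distrib_right)
    also have "\<dots> = indicator (Farey q -` B \<inter> {0..1}) x * F x" using ind_sum[OF elim B01] by simp
    finally show ?case .
  qed
  finally show ?thesis .
qed

end


context fsetup
begin

definition hh :: "real \<Rightarrow> real" where "hh x = indicator {0..1} x * hfun x"

lemma HA_in01: "k \<in> K \<Longrightarrow> y \<in> {0..1} \<Longrightarrow> HA k y \<in> {0..1}"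
  using H_in[of "(k,False)" y] I_sub01[of "(k,False)"] unfolding J_def H_def by auto
lemma HB_in01: "k \<in> K \<Longrightarrow> y \<in> {0..1} \<Longrightarrow> HB k y \<in> {0..1}"
  using H_in[of "(k,True)" y] I_sub01[of "(k,True)"] unfolding J_def H_def by auto

lemma termA: assumes k: "k \<in> K" and y: "0 < y" "y \<le> 1"
  shows "\<bar>dA k y\<bar> * hh (HA k y) = s k / (s k * y + s (k+1)) - s (k-1) / (s (k-1) * y + s k)"
proof -
  note p = spos_K[OF k]
  have L0: "s (k-1) * y + s k > 0" using p y by (simp add: add_pos_pos)
  have L1: "s k * y + s (k+1) > 0" using p y by (simp add: add_pos_nonneg)
  have hA: "hh (HA k y) = (s (k-1) * y + s k) / (s k * y + s (k+1))"
    using HA_in01[OF k, of y] y unfolding hh_def hfun_def HA_def by simp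
  have d: "s k * s k - s (k+1) * s (k-1) = 1" using detK[OF k] .
  have "s k / (s k * y + s (k+1)) - s (k-1) / (s (k-1) * y + s k)
      = (s k * (s (k-1) * y + s k) - s (k-1) * (s k * y + s (k+1))) / ((s k * y + s (k+1)) * (s (k-1) * y + s k))"
    using L0 L1 by (simp add: field_simps)
  also have "s k * (s (k-1) * y + s k) - s (k-1) * (s k * y + s (k+1)) = 1"
    using d by (simp add: algebra_simps)
  finally have r: "s k / (s k * y + s (k+1)) - s (k-1) / (s (k-1) * y + s k)
      = 1 / ((s k * y + s (k+1)) * (s (k-1) * y + s k))" .
  have ad: "\<bar>dA k y\<bar> = 1 / (s (k-1) * y + s k)^2" unfolding dA_def by simp
  have gen: "\<And>u v::real. u > 0 \<Longrightarrow> v > 0 \<Longrightarrow> 1 / u^2 * (u / v) = 1 / (v * u)"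
    by (simp add: power2_eq_square)
  show ?thesis unfolding r hA ad by (rule gen[OF L0 L1])
qed

lemma termB: assumes k: "k \<in> K" and y: "0 < y" "y \<le> 1"
  shows "\<bar>dB k y\<bar> * hh (HB k y) = s k / (s k * y + s (k-1)) - s (k+1) / (s (k+1) * y + s k)"
proof -
  note p = spos_K[OF k]
  have L0: "s k * y + s (k-1) > 0" using p y by (simp add: add_pos_pos)
  have L1: "s (k+1) * y + s k > 0" using p y by (simp add: add_nonneg_pos)
  have hB: "hh (HB k y) = (s k * y + s (k-1)) / (s (k+1) * y + s k)"
    using HB_in01[OF k, of y] y unfolding hh_def hfun_def HB_def by simp
  have d: "s k * s k - s (k+1) * s (k-1) = 1" using detK[OF k] .
  have "s k / (s k * y + s (k-1)) - s (k+1) / (s (k+1) * y + s k)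
      = (s k * (s (k+1) * y + s k) - s (k+1) * (s k * y + s (k-1))) / ((s k * y + s (k-1)) * (s (k+1) * y + s k))"
    using L0 L1 by (simp add: field_simps)
  also have "s k * (s (k+1) * y + s k) - s (k+1) * (s k * y + s (k-1)) = 1"
    using d by (simp add: algebra_simps)
  finally have r: "s k / (s k * y + s (k-1)) - s (k+1) / (s (k+1) * y + s k)
      = 1 / ((s k * y + s (k-1)) * (s (k+1) * y + s k))" .
  have ad: "\<bar>dB k y\<bar> = 1 / (s k * y + s (k-1))^2" unfolding dB_def by simp
  have gen: "\<And>u v::real. u > 0 \<Longrightarrow> v > 0 \<Longrightarrow> 1 / u^2 * (u / v) = 1 / (u * v)"
    by (simp add: power2_eq_square)
  show ?thesis unfolding r hB ad by (rule gen[OF L0 L1])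
qed

lemma PP_hh: assumes y: "0 < y" "y \<le> 1" shows "PP hh y = hfun y"
proof -
  define f where "f j = s (j-1) / (s (j-1) * y + s j)" for j
  define g where "g j = s j / (s j * y + s (j-1))" for j
  have "PP hh y = (\<Sum>k\<in>K. (f (Suc k) - f k) + (- (g (Suc k) - g k)))"
    unfolding PP_def
    by (intro sum.cong refl) (simp add: termA termB y f_def g_def)
  also have "\<dots> = (\<Sum>k = m+1..q-1. f (Suc k) - f k) - (\<Sum>k = m+1..q-1. g (Suc k) - g k)"
    unfolding K_def by (simp add: sum.distrib sum_subtractf)
  also have "\<dots> = (f q - f (m+1)) - (g q - g (m+1))"
    using q_eq m_ge by (simp add: sum_Suc_diff)
  also have "\<dots> = 1 / y"
  proof -
    have sq1: "s (q-1) > 0" using s_pos[of "q-1"] q3 by simp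
    have sm: "s m > 0" using s_pos[of m] m_ge q_eq by simp
    have "f q = 1 / y" unfolding f_def using s_q sq1 y by simp
    moreover have "f (m+1) = 1 / (y + 1)"
    proof -
      have "f (m+1) = s m / (s m * (y + 1))" unfolding f_def using s_m by (simp add: algebra_simps)
      then show ?thesis using sm y by simp
    qed
    moreover have "g q = 0" unfolding g_def using s_q by simp
    moreover have "g (m+1) = 1 / (y + 1)"
    proof -
      have "g (m+1) = s m / (s m * (y + 1))" unfolding g_def using s_m by (simp add: algebra_simps)
      then show ?thesis using sm y by simp
    qed
    ultimately show ?thesis by simp
  qed
  finally show ?thesis unfolding hfun_def .
qed

lemma Pq_PP: assumes y: "y \<in> {0..1}" shows "Pq q F y = PP F y"
proof -
  have "\<And>k. k \<in> K \<Longrightarrow> tau (gk q k) F y = \<bar>dA k y\<bar> * F (HA k y)"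
  proof -
    fix k assume k: "k \<in> K"
    have "deriv (HA k) y = dA k y" using HA_deriv[OF k] y by (intro DERIV_imp_deriv) auto
    then show "tau (gk q k) F y = \<bar>dA k y\<bar> * F (HA k y)"
      unfolding tau_def using mob_HA[of k] K_bounds[OF k] by simp
  qed
  moreover have "\<And>k. k \<in> K \<Longrightarrow> tau (mmul Qm (gk q k)) F y = \<bar>dB k y\<bar> * F (HB k y)"
  proof -
    fix k assume k: "k \<in> K"
    have "deriv (HB k) y = dB k y" using HB_deriv[OF k] y by (intro DERIV_imp_deriv) auto
    then show "tau (mmul Qm (gk q k)) F y = \<bar>dB k y\<bar> * F (HB k y)"
      unfolding tau_def using mob_HB[of k] K_bounds[OF k] by simp
  qed
  ultimately show ?thesis unfolding Pq_def PP_def Kq_eq by (intro sum.cong) auto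
qed

lemma PP_meas[measurable]: assumes [measurable]: "F \<in> borel_measurable borel"
  shows "PP F \<in> borel_measurable borel"
  unfolding PP_def[abs_def] by measurable

lemma PP_diff: "PP (\<lambda>x. F1 x - F2 x) y = PP F1 y - PP F2 y"
  unfolding PP_def by (simp add: sum_subtractf algebra_simps)

lemma PP_nonneg: "(\<And>x. F x \<ge> 0) \<Longrightarrow> PP F y \<ge> 0"
  unfolding PP_def by (intro sum_nonneg add_nonneg_nonneg mult_nonneg_nonneg) auto

end


lemma ennreal_all_nat_ge_top:
  fixes x :: ennreal
  assumes "\<And>n::nat. ennreal (real n) \<le> x" shows "x = \<infinity>"
proof (cases x)
  case (real r)
  obtain n :: nat where "r < real n" using reals_Archimedean2 by blast
  moreover have "ennreal (real n) \<le> ennreal r" using assms real by simp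
  ultimately show ?thesis using real by (simp add: ennreal_le_iff2 not_le) 
qed simp

lemma nn_1_over_x: "(\<integral>\<^sup>+ x. ennreal (indicator {0..1} x * hfun x) \<partial>lborel) = \<infinity>"
proof (rule ennreal_all_nat_ge_top)
  fix n :: nat
  define c where "c = exp (- real n)"
  have c: "0 < c" "c \<le> 1" unfolding c_def by auto
  have int: "((\<lambda>x. 1 / x) has_integral (ln 1 - ln c)) {c..1}"
  proof (rule fundamental_theorem_of_calculus)
    show "c \<le> 1" using c by simp
    fix x assume "x \<in> {c..1}"
    then have "x > 0" using c by auto
    then have "(ln has_real_derivative inverse x) (at x)" by (rule DERIV_ln)
    then show "(ln has_vector_derivative 1 / x) (at x within {c..1})"
      by (simp add: has_real_derivative_iff_has_vector_derivative[symmetric] divide_inverse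
          has_field_derivative_at_within)
  qed
  have "ln 1 - ln c = real n" unfolding c_def by simp
  then have e: "(\<integral>\<^sup>+ x. ennreal (1 / x) * indicator {c..1} x \<partial>lborel) = ennreal (real n)"
    using nn_integral_has_integral_lebesgue'[OF _ int] c by auto
  have "(\<integral>\<^sup>+ x. ennreal (1 / x) * indicator {c..1} x \<partial>lborel) \<le> (\<integral>\<^sup>+ x. ennreal (indicator {0..1} x * hfun x) \<partial>lborel)"
    by (rule nn_integral_mono) (use c in \<open>auto simp: hfun_def indicator_def\<close>)
  then show "ennreal (real n) \<le> (\<integral>\<^sup>+ x. ennreal (indicator {0..1} x * hfun x) \<partial>lborel)"
    using e by simp
qed

context fsetup
begin

abbreviation R :: "real measure" where "R \<equiv> restrict_space lborel {0..1}"

lemma hfun_meas[measurable]: "hfun \<in> borel_measurable borel" unfolding hfun_def[abs_def] by measurable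
lemma hh_meas[measurable]: "hh \<in> borel_measurable borel" unfolding hh_def[abs_def] by measurable
lemma hh_nonneg: "hh x \<ge> 0" unfolding hh_def hfun_def by (simp add: indicator_def)

lemma space_mu: "space mu = {0..1}" unfolding mu_def by simp
lemma sets_mu: "A \<in> sets mu \<longleftrightarrow> A \<subseteq> {0..1} \<and> A \<in> sets borel"
  unfolding mu_def by (simp add: sets_restrict_space_iff)

lemma emeasure_mu: assumes "A \<in> sets borel" "A \<subseteq> {0..1}"
  shows "emeasure mu A = (\<integral>\<^sup>+ x. ennreal (indicator A x * hh x) \<partial>lborel)"
proof -
  have hR: "(\<lambda>x. ennreal (hfun x)) \<in> borel_measurable R"
    by (intro measurable_restrict_space1) measurable
  have AR: "A \<in> sets R" using assms by (simp add: sets_restrict_space_iff)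
  have "emeasure mu A = (\<integral>\<^sup>+ x. ennreal (hfun x) * indicator A x \<partial>R)"
    unfolding mu_def by (rule emeasure_density[OF hR AR])
  also have "\<dots> = (\<integral>\<^sup>+ x. ennreal (hfun x) * indicator A x * indicator {0..1} x \<partial>lborel)"
    by (rule nn_integral_restrict_space) simp
  also have "\<dots> = (\<integral>\<^sup>+ x. ennreal (indicator A x * hh x) \<partial>lborel)"
    using assms(2) by (intro nn_integral_cong) (auto simp: hh_def indicator_def hfun_def)
  finally show ?thesis .
qed

lemma mu_infinite: "emeasure mu (space mu) = \<infinity>"
proof -
  have "(\<lambda>x. ennreal (indicator {0..1} x * hh x)) = (\<lambda>x. ennreal (indicator {0..1} x * hfun x))"
    by (auto simp: hh_def indicator_def)
  then show ?thesis unfolding space_mu using emeasure_mu[of "{0..1}"] nn_1_over_x by simp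
qed

lemma mu_sigma_finite: "sigma_finite_measure mu"
proof -
  have "sigma_finite_measure R"
    by (rule sigma_finite_measure_restrict_space[OF sigma_finite_lborel]) simp
  moreover have "(\<lambda>x. ennreal (hfun x)) \<in> borel_measurable R"
    by (intro measurable_restrict_space1) measurable
  ultimately show ?thesis unfolding mu_def
    using sigma_finite_measure.sigma_finite_iff_density_finite by fastforce
qed

lemma Farey_mu_meas: "Farey q \<in> measurable mu mu"
proof -
  have "Farey q \<in> measurable R R"
  proof (rule measurable_restrict_space2)
    show "Farey q \<in> space R \<rightarrow> {0..1}" using Farey_in by auto
    show "Farey q \<in> R \<rightarrow>\<^sub>M lborel" by (intro measurable_restrict_space1) simp
  qed
  then show ?thesis unfolding mu_def by (simp cong: measurable_cong_sets)
qed

lemma Farey_pre_sets: "B \<in> sets borel \<Longrightarrow> Farey q -` B \<inter> {0..1} \<in> sets borel"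
  using measurable_sets_borel[OF Farey_meas] by simp

lemma mu_invariant: "invariant_measure mu (Farey q)"
  unfolding invariant_measure_def
proof (intro conjI ballI Farey_mu_meas)
  fix B assume "B \<in> sets mu"
  then have B: "B \<subseteq> {0..1}" "B \<in> sets borel" using sets_mu by auto
  have "emeasure mu (Farey q -` B \<inter> space mu)
      = (\<integral>\<^sup>+ x. ennreal (indicator (Farey q -` B \<inter> {0..1}) x * hh x) \<partial>lborel)"
    unfolding space_mu using Farey_pre_sets[OF B(2)] by (intro emeasure_mu) auto
  also have "\<dots> = (\<integral>\<^sup>+ y. ennreal (indicator B y * PP hh y) \<partial>lborel)"
    using core_nn[OF B(2) B(1) hh_meas hh_nonneg] by simp
  also have "\<dots> = (\<integral>\<^sup>+ y. ennreal (indicator B y * hh y) \<partial>lborel)"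
  proof (intro nn_integral_cong_AE, use AE_lborel_singleton[of 0] in eventually_elim)
    case (elim y)
    show ?case
    proof (cases "y \<in> B")
      case True
      then have "0 < y" "y \<le> 1" using B(1) elim by force+
      then show ?thesis using PP_hh True by (simp add: hh_def)
    qed simp
  qed
  also have "\<dots> = emeasure mu B" using emeasure_mu[OF B(2,1)] by simp
  finally show "emeasure mu (Farey q -` B \<inter> space mu) = emeasure mu B" .
qed

end


context fsetup
begin

lemma core_int_nn:
  assumes psi: "integrable lborel psi" and pnn: "\<And>x. psi x \<ge> 0"
    and B[measurable]: "B \<in> sets borel" and B01: "B \<subseteq> {0..1}"
  shows "integrable lborel (\<lambda>y. indicator B y * PP psi y)"
    "(\<integral>y. indicator B y * PP psi y \<partial>lborel) = (\<integral>x. indicator (Farey q -` B \<inter> {0..1}) x * psi x \<partial>lborel)"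
proof -
  have pm[measurable]: "psi \<in> borel_measurable borel" using borel_measurable_integrable[OF psi] by simp
  define A where "A = Farey q -` B \<inter> {0..1}"
  have A[measurable]: "A \<in> sets borel" unfolding A_def using Farey_pre_sets[OF B] .
  have iA: "integrable lborel (\<lambda>x. indicator A x * psi x)"
    using integrable_mult_indicator[of A lborel psi] psi A by simp
  have nnA: "(\<integral>\<^sup>+ x. ennreal (indicator A x * psi x) \<partial>lborel) = ennreal (\<integral>x. indicator A x * psi x \<partial>lborel)"
    using iA pnn by (intro nn_integral_eq_integral) auto
  have c: "(\<integral>\<^sup>+ y. ennreal (indicator B y * PP psi y) \<partial>lborel) = (\<integral>\<^sup>+ x. ennreal (indicator A x * psi x) \<partial>lborel)"
    unfolding A_def using core_nn[OF B B01 pm pnn] .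
  have lnn: "\<And>y. indicator B y * PP psi y \<ge> 0" using PP_nonneg[of psi] pnn by simp
  show iB: "integrable lborel (\<lambda>y. indicator B y * PP psi y)"
    using c nnA lnn by (intro integrableI_nonneg) auto
  have "ennreal (\<integral>y. indicator B y * PP psi y \<partial>lborel) = ennreal (\<integral>x. indicator A x * psi x \<partial>lborel)"
    using nn_integral_eq_integral[OF iB] lnn c nnA by simp
  moreover have "(\<integral>y. indicator B y * PP psi y \<partial>lborel) \<ge> 0" using lnn by (intro integral_nonneg_AE) auto
  moreover have "(\<integral>x. indicator A x * psi x \<partial>lborel) \<ge> 0" using pnn by (intro integral_nonneg_AE) auto
  ultimately show "(\<integral>y. indicator B y * PP psi y \<partial>lborel) = (\<integral>x. indicator (Farey q -` B \<inter> {0..1}) x * psi x \<partial>lborel)"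
    unfolding A_def by simp
qed

lemma core_int:
  assumes phi: "integrable lborel phi"
    and B[measurable]: "B \<in> sets borel" and B01: "B \<subseteq> {0..1}"
  shows "integrable lborel (\<lambda>y. indicator B y * PP phi y)"
    "(\<integral>y. indicator B y * PP phi y \<partial>lborel) = (\<integral>x. indicator (Farey q -` B \<inter> {0..1}) x * phi x \<partial>lborel)"
proof -
  define p where "p x = max (phi x) 0" for x
  define n where "n x = max (- phi x) 0" for x
  have ip: "integrable lborel p" unfolding p_def using phi by auto
  have in_: "integrable lborel n" unfolding n_def using phi by auto
  have pn: "\<And>x. p x \<ge> 0" "\<And>x. n x \<ge> 0" unfolding p_def n_def by auto
  have ph: "phi = (\<lambda>x. p x - n x)" unfolding p_def n_def by (auto simp: max_def)
  have PPd: "\<And>y. PP phi y = PP p y - PP n y" by (subst ph) (rule PP_diff)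
  note P = core_int_nn[OF ip pn(1) B B01] and N = core_int_nn[OF in_ pn(2) B B01]
  have e1: "(\<lambda>y. indicator B y * PP phi y) = (\<lambda>y. indicator B y * PP p y - indicator B y * PP n y)"
    by (rule ext) (simp only: PPd right_diff_distrib)
  show "integrable lborel (\<lambda>y. indicator B y * PP phi y)"
    unfolding e1 using P(1) N(1) by (rule Bochner_Integration.integrable_diff)
  define A where "A = Farey q -` B \<inter> {0..1}"
  have A[measurable]: "A \<in> sets borel" unfolding A_def using Farey_pre_sets[OF B] .
  have iAp: "integrable lborel (\<lambda>x. indicator A x * p x)"
    using integrable_mult_indicator[of A lborel p] ip A by simp
  have iAn: "integrable lborel (\<lambda>x. indicator A x * n x)"
    using integrable_mult_indicator[of A lborel n] in_ A by simp
  have e2: "(\<lambda>x. indicator A x * phi x) = (\<lambda>x. indicator A x * p x - indicator A x * n x)"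
    by (subst ph) (auto simp: algebra_simps)
  have "(\<integral>y. indicator B y * PP phi y \<partial>lborel)
      = (\<integral>y. indicator B y * PP p y \<partial>lborel) - (\<integral>y. indicator B y * PP n y \<partial>lborel)"
    unfolding e1 using P(1) N(1) by (rule Bochner_Integration.integral_diff)
  also have "\<dots> = (\<integral>x. indicator A x * p x \<partial>lborel) - (\<integral>x. indicator A x * n x \<partial>lborel)"
    using P(2) N(2) unfolding A_def by simp
  also have "\<dots> = (\<integral>x. indicator A x * phi x \<partial>lborel)"
    unfolding e2 using iAp iAn by (rule Bochner_Integration.integral_diff[symmetric])
  finally show "(\<integral>y. indicator B y * PP phi y \<partial>lborel) = (\<integral>x. indicator (Farey q -` B \<inter> {0..1}) x * phi x \<partial>lborel)"
    unfolding A_def .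
qed

end


context fsetup
begin

lemma transfer:
  assumes f: "integrable mu f"
  shows "is_transfer_image mu (Farey q) f
           (\<lambda>x. Pq q (\<lambda>y. indicator {0..1} y * (f y * hfun y)) x / hfun x)"
proof -
  define phi where "phi y = indicator {0..1} y * (f y * hfun y)" for y
  define g where "g x = Pq q phi x / hfun x" for x
  have hR[measurable]: "hfun \<in> borel_measurable R"
    by (intro measurable_restrict_space1) measurable
  have hnn: "AE x in R. 0 \<le> hfun x"
    by (rule AE_I2) (auto simp: hfun_def)
  have mu_eq: "mu = density R (\<lambda>x. ennreal (hfun x))" unfolding mu_def by simp
  have fR[measurable]: "f \<in> borel_measurable R"
    using borel_measurable_integrable[OF f] unfolding mu_def by (simp cong: measurable_cong_sets)
  have i1: "integrable R (\<lambda>x. hfun x *\<^sub>R f x)"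
    using f unfolding mu_eq by (subst (asm) integrable_density) (auto simp: hnn)
  have i2: "integrable lborel (\<lambda>x. indicator {0..1} x *\<^sub>R (hfun x *\<^sub>R f x))"
    using i1 by (subst (asm) integrable_restrict_space) auto
  have phi_eq: "phi = (\<lambda>x. indicator {0..1} x *\<^sub>R (hfun x *\<^sub>R f x))"
    unfolding phi_def by (auto simp: algebra_simps)
  have iphi: "integrable lborel phi" using i2 phi_eq by simp
  have phim[measurable]: "phi \<in> borel_measurable borel" using borel_measurable_integrable[OF iphi] by simp
  have g01: "\<And>x. x \<in> {0..1} \<Longrightarrow> g x = x * PP phi x"
    unfolding g_def hfun_def using Pq_PP by (simp add: mult.commute)
  have gR[measurable]: "g \<in> borel_measurable R"
  proof -
    have "(\<lambda>x. x * PP phi x) \<in> borel_measurable R"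
      by (intro measurable_restrict_space1) measurable
    then show ?thesis
      by (rule measurable_cong[THEN iffD1, rotated]) (simp add: g01 space_restrict_space)
  qed
  have gI[measurable]: "(\<lambda>x. indicator {0..1} x * g x) \<in> borel_measurable borel"
    using gR by (subst (asm) borel_measurable_restrict_space_iff) auto
  have key: "\<And>x. x \<noteq> 0 \<Longrightarrow> indicator {0..1} x *\<^sub>R (hfun x *\<^sub>R g x) = indicator {0..1} x * PP phi x"
    using g01 by (auto simp: indicator_def hfun_def)
  have iPP: "integrable lborel (\<lambda>x. indicator {0..1} x * PP phi x)"
    using core_int(1)[OF iphi, of "{0..1}"] by simp
  have ig: "integrable mu g"
  proof -
    have "integrable lborel (\<lambda>x. indicator {0..1} x *\<^sub>R (hfun x *\<^sub>R g x))"
    proof (rule integrable_cong_AE_imp[OF iPP])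
      have "(\<lambda>x. indicator {0..1} x *\<^sub>R (hfun x *\<^sub>R g x))
          = (\<lambda>x. hfun x * (indicator {0..1} x * g x))" by (auto simp: fun_eq_iff)
      then show "(\<lambda>x. indicator {0..1} x *\<^sub>R (hfun x *\<^sub>R g x)) \<in> borel_measurable lborel"
        by simp
      show "AE x in lborel. indicator {0..1} x * PP phi x = indicator {0..1} x *\<^sub>R (hfun x *\<^sub>R g x)"
        using AE_lborel_singleton[of 0] proof eventually_elim
        case (elim x) show ?case using key[OF elim] by (metis scaleR_conv_of_real of_real_eq_id id_apply)
      qed
    qed
    then have "integrable R (\<lambda>x. hfun x *\<^sub>R g x)"
      by (subst integrable_restrict_space) auto
    then show ?thesis unfolding mu_eq by (subst integrable_density) (auto simp: hnn)
  qed
  show ?thesis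
    unfolding is_transfer_image_def phi_def[symmetric] g_def[symmetric]
  proof (intro conjI ballI ig)
    fix B assume "B \<in> sets mu"
    then have B[measurable]: "B \<in> sets borel" and B01: "B \<subseteq> {0..1}" using sets_mu by auto
    define A where "A = Farey q -` B \<inter> {0..1}"
    have A[measurable]: "A \<in> sets borel" unfolding A_def using Farey_pre_sets[OF B] .
    have BR: "B \<in> sets R" using B B01 by (simp add: sets_restrict_space_iff)
    have AR: "A \<in> sets R" using A unfolding A_def by (simp add: sets_restrict_space_iff)
    have "(\<integral>x\<in>B. g x \<partial>mu) = (\<integral>x. indicator B x *\<^sub>R g x \<partial>mu)"
      by (simp add: set_lebesgue_integral_def)
    also have "\<dots> = (\<integral>x. hfun x *\<^sub>R (indicator B x *\<^sub>R g x) \<partial>R)"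
      unfolding mu_eq using BR by (intro integral_density) (auto simp: hnn)
    also have "\<dots> = (\<integral>x. indicator {0..1} x *\<^sub>R (hfun x *\<^sub>R (indicator B x *\<^sub>R g x)) \<partial>lborel)"
      by (rule integral_restrict_space) simp
    also have "\<dots> = (\<integral>x. indicator B x * PP phi x \<partial>lborel)"
    proof (rule integral_cong_AE)
      have "(\<lambda>x. indicator {0..1} x *\<^sub>R (hfun x *\<^sub>R (indicator B x *\<^sub>R g x)))
          = (\<lambda>x. indicator B x * hfun x * (indicator {0..1} x * g x))" by (auto simp: fun_eq_iff)
      then show "(\<lambda>x. indicator {0..1} x *\<^sub>R (hfun x *\<^sub>R (indicator B x *\<^sub>R g x))) \<in> borel_measurable lborel"
        by simp
      show "(\<lambda>x. indicator B x * PP phi x) \<in> borel_measurable lborel" by simp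
      show "AE x in lborel. indicator {0..1} x *\<^sub>R (hfun x *\<^sub>R (indicator B x *\<^sub>R g x)) = indicator B x * PP phi x"
        using AE_lborel_singleton[of 0] proof eventually_elim
        case (elim x)
        show ?case
        proof (cases "x \<in> B")
          case True
          then have "x \<in> {0..1}" using B01 by auto
          then show ?thesis using True key[OF elim] by (simp add: indicator_def)
        qed simp
      qed
    qed
    also have "\<dots> = (\<integral>x. indicator A x * phi x \<partial>lborel)"
      unfolding A_def by (rule core_int(2)[OF iphi B B01])
    also have "\<dots> = (\<integral>x. indicator {0..1} x *\<^sub>R (hfun x *\<^sub>R (indicator A x *\<^sub>R f x)) \<partial>lborel)"
      unfolding phi_def A_def by (rule Bochner_Integration.integral_cong) (auto simp: indicator_def)
    also have "\<dots> = (\<integral>x. hfun x *\<^sub>R (indicator A x *\<^sub>R f x) \<partial>R)"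
      by (rule integral_restrict_space[symmetric]) simp
    also have "\<dots> = (\<integral>x. indicator A x *\<^sub>R f x \<partial>mu)"
      unfolding mu_eq using AR by (intro integral_density[symmetric]) (auto simp: hnn)
    also have "\<dots> = (\<integral>x\<in>(Farey q -` B \<inter> space mu). f x \<partial>mu)"
      unfolding A_def space_mu by (simp add: set_lebesgue_integral_def)
    finally show "(\<integral>x\<in>B. g x \<partial>mu) = (\<integral>x\<in>(Farey q -` B \<inter> space mu). f x \<partial>mu)" .
  qed
qed

end

theorem proposition2p7:
  fixes q :: nat
  assumes "odd q" and "q \<ge> 3"
  shows "emeasure mu (space mu) = \<infinity> \<and> sigma_finite_measure mu \<and>
         invariant_measure mu (Farey q) \<and>
         (\<forall>f. integrable mu f \<longrightarrow>
            is_transfer_image mu (Farey q) f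
              (\<lambda>x. Pq q (\<lambda>y. indicator {0..1} y * (f y * hfun y)) x / hfun x))"
proof -
  interpret fsetup q using assms by unfold_locales
  show ?thesis using mu_infinite mu_sigma_finite mu_invariant transfer by blast
qed

end
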